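(* Let $\bar D$ be any distribution of $(\mathsf X,\bar{\mathsf Y})$ on $\mathcal X\times\{0,1\}$ and $f\colon\mathcal X\to[0,1]$ a randomised classifier with $\mathrm{FNR}(f;\bar D)\ne1$. Then for every $\epsilon\in[0,\tfrac12]$, $\mathrm{BER}(f;\bar D)\le\epsilon$ implies $\mathrm{DI}(f;\bar D)\le2\epsilon$; equivalently, for every $\tau\in[0,1]$, $\mathrm{DI}(f;\bar D)\ge\tau$ implies $\mathrm{BER}(f;\bar D)\ge\tau/2$.
   Context: A randomised classifier $f\colon\mathcal X\to[0,1]$ predicts $1$ on $x$ with probability $f(x)$. $\mathrm{FNR}(f;\bar D)=\mathbb E_{\mathsf X\mid\bar{\mathsf Y}=1}[1-f(\mathsf X)]$, $\mathrm{FPR}(f;\bar D)=\mathbb E_{\mathsf X\mid\bar{\mathsf Y}=0}[f(\mathsf X)]$, the balanced error is $\mathrm{BER}(f;\bar D)=\frac{\mathrm{FPR}(f;\bar D)+\mathrm{FNR}(f;\bar D)}{2}$, and the disparate impact factor is $\mathrm{DI}(f;\bar D)=\frac{\mathrm{FPR}(f;\bar D)}{1-\mathrm{FNR}(f;\bar D)}$. *)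

theory Defs
  imports "HOL-Probability.Probability"
begin

text \<open>A distribution of (X, Ybar) is a probability measure D on the product space
  X \<times> bool (True = label 1). Conditional expectation given an event A of positive
  probability is E[g 1_A] / P(A).\<close>

definition cond_exp_event :: "('b) measure \<Rightarrow> 'b set \<Rightarrow> ('b \<Rightarrow> real) \<Rightarrow> real" where
  "cond_exp_event D A g = (LINT z:A|D. g z) / measure D A"

definition pos_event :: "('a \<times> bool) measure \<Rightarrow> ('a \<times> bool) set" where
  "pos_event D = {z \<in> space D. snd z}"

definition neg_event :: "('a \<times> bool) measure \<Rightarrow> ('a \<times> bool) set" where
  "neg_event D = {z \<in> space D. \<not> snd z}"

definition FNR :: "('a \<Rightarrow> real) \<Rightarrow> ('a \<times> bool) measure \<Rightarrow> real" where
  "FNR f D = cond_exp_event D (pos_event D) (\<lambda>z. 1 - f (fst z))"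

definition FPR :: "('a \<Rightarrow> real) \<Rightarrow> ('a \<times> bool) measure \<Rightarrow> real" where
  "FPR f D = cond_exp_event D (neg_event D) (\<lambda>z. f (fst z))"

definition BER :: "('a \<Rightarrow> real) \<Rightarrow> ('a \<times> bool) measure \<Rightarrow> real" where
  "BER f D = (FPR f D + FNR f D) / 2"

definition DI :: "('a \<Rightarrow> real) \<Rightarrow> ('a \<times> bool) measure \<Rightarrow> real" where
  "DI f D = FPR f D / (1 - FNR f D)"

end

theory Submission
  imports Defs
begin

lemma cond_bounds:
  fixes D :: "'b measure"
  assumes "prob_space D" and "measure D A > 0"
    and gm: "g \<in> borel_measurable D" and gb: "\<And>z. 0 \<le> g z \<and> g z \<le> 1"
  shows "0 \<le> cond_exp_event D A g \<and> cond_exp_event D A g \<le> 1"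
proof -
  interpret prob_space D by fact
  have A: "A \<in> sets D" using assms(2) measure_notin_sets by fastforce
  have int: "set_integrable D A g"
    unfolding set_integrable_def
  proof (rule Bochner_Integration.integrable_bound[where f="\<lambda>_. 1::real"])
    show "integrable D (\<lambda>_. 1::real)" by simp
    show "(\<lambda>x. indicator A x *\<^sub>R g x) \<in> borel_measurable D" using gm A by measurable
    show "AE x in D. norm (indicator A x *\<^sub>R g x) \<le> norm (1::real)"
      using gb by (auto simp: indicator_def abs_le_iff)
  qed
  have i1: "set_integrable D A (\<lambda>_. 1::real)"
    using A by (simp add: set_integrable_def emeasure_eq_measure)
  have "(LINT z:A|D. g z) \<le> (LINT z:A|D. 1)"
    using int i1 gb by (intro set_integral_mono) auto
  also have "\<dots> = measure D A" using A by (simp add: set_lebesgue_integral_def integral_indicator emeasure_eq_measure)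
  finally have up: "(LINT z:A|D. g z) \<le> measure D A" .
  have lo: "0 \<le> (LINT z:A|D. g z)"
    using gb unfolding set_lebesgue_integral_def by (intro integral_nonneg_AE) (auto simp: indicator_def)
  show ?thesis using up lo assms(2) by (simp add: cond_exp_event_def)
qed

theorem corollary3:
  fixes X :: "'a measure" and D :: "('a \<times> bool) measure" and f :: "'a \<Rightarrow> real"
  assumes "prob_space D"
    and "sets D = sets (X \<Otimes>\<^sub>M count_space UNIV)"
    and "measure D (pos_event D) > 0"
    and "measure D (neg_event D) > 0"
    and "f \<in> borel_measurable X"
    and "\<And>x. 0 \<le> f x \<and> f x \<le> 1"
    and "FNR f D \<noteq> 1"
  shows "(\<forall>\<epsilon>\<in>{0..1/2}. BER f D \<le> \<epsilon> \<longrightarrow> DI f D \<le> 2 * \<epsilon>) \<and>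
         (\<forall>\<tau>\<in>{0..1}. DI f D \<ge> \<tau> \<longrightarrow> BER f D \<ge> \<tau> / 2)"
proof -
  have fm: "(\<lambda>z. f (fst z)) \<in> borel_measurable D"
  proof -
    have "(\<lambda>z. f (fst z)) \<in> borel_measurable (X \<Otimes>\<^sub>M count_space UNIV)"
      using assms(5) by measurable
    thus ?thesis using measurable_cong_sets[OF assms(2) refl] by blast
  qed
  have fm2: "(\<lambda>z. 1 - f (fst z)) \<in> borel_measurable D" using fm by measurable
  have p: "0 \<le> FPR f D \<and> FPR f D \<le> 1" unfolding FPR_def
    by (rule cond_bounds[OF assms(1) assms(4) fm]) (use assms(6) in auto)
  have q: "0 \<le> FNR f D \<and> FNR f D \<le> 1" unfolding FNR_def
    by (rule cond_bounds[OF assms(1) assms(3) fm2]) (use assms(6) in auto)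
  define a where "a = FPR f D"
  define b where "b = FNR f D"
  have a: "0 \<le> a" "a \<le> 1" and b: "0 \<le> b" "b < 1"
    using p q assms(7) by (auto simp: a_def b_def)
  have key: "a + b \<le> 1 \<Longrightarrow> a / (1 - b) \<le> a + b"
  proof -
    assume h: "a + b \<le> 1"
    have "a \<le> (a + b) * (1 - b)"
    proof -
      have "0 \<le> b * (1 - a - b)" using b h by simp
      thus ?thesis by (simp add: algebra_simps)
    qed
    thus ?thesis using b by (simp add: divide_simps)
  qed
  have dba: "DI f D = a / (1 - b)" "BER f D = (a + b) / 2"
    by (auto simp: DI_def BER_def a_def b_def)
  show ?thesis
  proof (intro conjI ballI impI)
    fix e :: real assume "e \<in> {0..1/2}" "BER f D \<le> e"
    thus "DI f D \<le> 2 * e" using key dba by auto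
  next
    fix t :: real assume "t \<in> {0..1}" "t \<le> DI f D"
    thus "t / 2 \<le> BER f D" using key dba by (cases "a + b \<le> 1") auto
  qed
qed

end
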